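(* Let $H$ be a group, let $\phi\in\operatorname{Aut}(H)$ and let $K$ be a proper subgroup of $H$ such that $K$ is a proper subgroup of its normalizer $N_H(K)$ and $K$ contains an element of infinite order. Let $G=H\ast_{(K,\phi)}=\langle H, t;\ tkt^{-1}=\phi(k),\ k\in K\rangle$. Then $\mathbb{Z}\times\mathbb{Z}$ embeds into $G$.
   Context: For a group $H$, $\phi\in\operatorname{Aut}(H)$ and a proper subgroup $K\lneq H$, the automorphism-induced HNN-extension $H\ast_{(K,\phi)}$ is the group given by the relative presentation $\langle H, t;\ tkt^{-1}=\phi(k),\ k\in K\rangle$. *)

theory Defs
  imports "HOL-Algebra.Algebra"
begin

text \<open>Words are lists of letters: Inl a is the generator a in carrier H,
Inr True is t, Inr False is t^-1.\<close>

type_synonym 'h hnn_word = "('h + bool) list"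

definition hnn_words :: "('h, 'm) monoid_scheme \<Rightarrow> 'h hnn_word set" where
  "hnn_words H = {w. \<forall>x\<in>set w. (case x of Inl a \<Rightarrow> a \<in> carrier H | Inr _ \<Rightarrow> True)}"

inductive hnn_eq :: "('h, 'm) monoid_scheme \<Rightarrow> 'h set \<Rightarrow> ('h \<Rightarrow> 'h)
    \<Rightarrow> 'h hnn_word \<Rightarrow> 'h hnn_word \<Rightarrow> bool"
  for H K \<phi> where
  hnn_refl: "hnn_eq H K \<phi> w w"
| hnn_sym: "hnn_eq H K \<phi> u v \<Longrightarrow> hnn_eq H K \<phi> v u"
| hnn_trans: "hnn_eq H K \<phi> u v \<Longrightarrow> hnn_eq H K \<phi> v w \<Longrightarrow> hnn_eq H K \<phi> u w"
| hnn_cong: "hnn_eq H K \<phi> u v \<Longrightarrow> hnn_eq H K \<phi> (a @ u @ b) (a @ v @ b)"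
| hnn_mult: "a \<in> carrier H \<Longrightarrow> b \<in> carrier H \<Longrightarrow>
    hnn_eq H K \<phi> [Inl a, Inl b] [Inl (a \<otimes>\<^bsub>H\<^esub> b)]"
| hnn_one: "hnn_eq H K \<phi> [Inl \<one>\<^bsub>H\<^esub>] []"
| hnn_t_tinv: "hnn_eq H K \<phi> [Inr True, Inr False] []"
| hnn_tinv_t: "hnn_eq H K \<phi> [Inr False, Inr True] []"
| hnn_conj: "k \<in> K \<Longrightarrow> hnn_eq H K \<phi> [Inr True, Inl k, Inr False] [Inl (\<phi> k)]"

definition hnn_class :: "('h, 'm) monoid_scheme \<Rightarrow> 'h set \<Rightarrow> ('h \<Rightarrow> 'h)
    \<Rightarrow> 'h hnn_word \<Rightarrow> 'h hnn_word set" where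
  "hnn_class H K \<phi> w = {v \<in> hnn_words H. hnn_eq H K \<phi> v w}"

definition HNN :: "('h, 'm) monoid_scheme \<Rightarrow> 'h set \<Rightarrow> ('h \<Rightarrow> 'h)
    \<Rightarrow> 'h hnn_word set monoid" where
  "HNN H K \<phi> =
     \<lparr> carrier = hnn_class H K \<phi> ` hnn_words H,
       monoid.mult = (\<lambda>A B. hnn_class H K \<phi> ((SOME u. u \<in> A) @ (SOME v. v \<in> B))),
       one = hnn_class H K \<phi> [] \<rparr>"

end

theory Submission
  imports Defs
begin

lemmas [trans] = hnn_trans

lemma Ectx: "hnn_eq H K \<phi> l r \<Longrightarrow> hnn_eq H K \<phi> (p @ l @ s) (p @ r @ s)"
  by (rule hnn_cong)

lemma E_app: "hnn_eq H K \<phi> u u' \<Longrightarrow> hnn_eq H K \<phi> v v' \<Longrightarrow> hnn_eq H K \<phi> (u @ v) (u' @ v')"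
proof -
  assume a: "hnn_eq H K \<phi> u u'" and b: "hnn_eq H K \<phi> v v'"
  have "hnn_eq H K \<phi> (u @ v) (u' @ v)" using Ectx[OF a, of "[]" v] by simp
  also have "hnn_eq H K \<phi> (u' @ v) (u' @ v')" using Ectx[OF b, of u' "[]"] by simp
  finally show ?thesis .
qed

definition rep :: "'a list \<Rightarrow> nat \<Rightarrow> 'a list" where
  "rep x n = concat (replicate n x)"

lemma rep_0[simp]: "rep x 0 = []" by (simp add: rep_def)
lemma rep_Suc: "rep x (Suc n) = x @ rep x n" by (simp add: rep_def)
lemma rep_Suc': "rep x (Suc n) = rep x n @ x"
  by (induction n) (auto simp: rep_def)
lemma rep_add: "rep x (n + m) = rep x n @ rep x m"
  by (simp add: rep_def replicate_add)
lemma set_rep: "set (rep x n) \<subseteq> set x"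
  by (induction n) (auto simp: rep_Suc)

lemma rep_cancel:
  assumes "hnn_eq H K \<phi> (x @ x') []"
  shows "hnn_eq H K \<phi> (rep x n @ rep x' n) []"
proof (induction n)
  case 0 show ?case by (simp add: hnn_refl)
next
  case (Suc n)
  have eq: "rep x (Suc n) @ rep x' (Suc n) = rep x n @ (x @ x') @ rep x' n"
    by (simp only: rep_Suc'[of x] rep_Suc[of x'] append_assoc)
  have "hnn_eq H K \<phi> (rep x (Suc n) @ rep x' (Suc n)) (rep x n @ [] @ rep x' n)"
    unfolding eq by (rule Ectx[OF assms])
  then show ?case using Suc hnn_trans by fastforce
qed

lemma rep_mix:
  assumes "hnn_eq H K \<phi> (x @ x') []"
  shows "hnn_eq H K \<phi> (rep x n @ rep x' m) (if m \<le> n then rep x (n - m) else rep x' (m - n))"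
proof (cases "m \<le> n")
  case True
  then have eq: "rep x n = rep x (n - m) @ rep x m" by (simp flip: rep_add)
  show ?thesis using True Ectx[OF rep_cancel[OF assms, of m], of "rep x (n-m)" "[]"]
    by (simp add: eq)
next
  case False
  then have eq: "rep x' m = rep x' n @ rep x' (m - n)" by (simp flip: rep_add)
  show ?thesis using False Ectx[OF rep_cancel[OF assms, of n], of "[]" "rep x' (m - n)"]
    by (simp add: eq)
qed

definition pw :: "'a list \<Rightarrow> 'a list \<Rightarrow> int \<Rightarrow> 'a list" where
  "pw x x' a = (if 0 \<le> a then rep x (nat a) else rep x' (nat (- a)))"

lemma set_pw: "set (pw x x' a) \<subseteq> set x \<union> set x'"
  using set_rep[of x "nat a"] set_rep[of x' "nat (-a)"] unfolding pw_def by auto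

lemma pw_add:
  assumes c1: "hnn_eq H K \<phi> (x @ x') []" and c2: "hnn_eq H K \<phi> (x' @ x) []"
  shows "hnn_eq H K \<phi> (pw x x' a @ pw x x' c) (pw x x' (a + c))"
proof -
  consider "0 \<le> a" "0 \<le> c" | "0 \<le> a" "c < 0" | "a < 0" "0 \<le> c" | "a < 0" "c < 0" by linarith
  then show ?thesis
  proof cases
    case 1
    then show ?thesis by (simp add: pw_def nat_add_distrib rep_add hnn_refl)
  next
    case 2
    have "hnn_eq H K \<phi> (rep x (nat a) @ rep x' (nat (-c)))
      (if nat (-c) \<le> nat a then rep x (nat a - nat (-c)) else rep x' (nat (-c) - nat a))"
      by (rule rep_mix[OF c1])
    moreover have "(if nat (-c) \<le> nat a then rep x (nat a - nat (-c)) else rep x' (nat (-c) - nat a))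
       = pw x x' (a + c)"
    proof -
      have "nat (-c) \<le> nat a \<Longrightarrow> nat a - nat (-c) = nat (a + c)" using 2 by arith
      moreover have "\<not> nat (-c) \<le> nat a \<Longrightarrow> nat (-c) - nat a = nat (- (a + c)) \<and> a + c < 0" using 2 by arith
      moreover have "nat (-c) \<le> nat a \<Longrightarrow> 0 \<le> a + c" using 2 by arith
      ultimately show ?thesis by (auto simp: pw_def)
    qed
    ultimately show ?thesis using 2 by (simp add: pw_def)
  next
    case 3
    have "hnn_eq H K \<phi> (rep x' (nat (-a)) @ rep x (nat c))
      (if nat c \<le> nat (-a) then rep x' (nat (-a) - nat c) else rep x (nat c - nat (-a)))"
      by (rule rep_mix[OF c2])
    moreover have "(if nat c \<le> nat (-a) then rep x' (nat (-a) - nat c) else rep x (nat c - nat (-a)))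
       = pw x x' (a + c)"
    proof -
      have "nat c \<le> nat (-a) \<Longrightarrow> nat (-a) - nat c = nat (- (a + c))" using 3 by arith
      moreover have "\<not> nat c \<le> nat (-a) \<Longrightarrow> nat c - nat (-a) = nat (a + c) \<and> 0 \<le> a + c" using 3 by arith
      moreover have "nat c \<le> nat (-a) \<Longrightarrow> a + c \<le> 0" using 3 by arith
      moreover have "a + c = 0 \<Longrightarrow> rep x' 0 = rep x 0" by simp
      ultimately show ?thesis by (auto simp: pw_def)
    qed
    ultimately show ?thesis using 3 by (simp add: pw_def)
  next
    case 4
    then show ?thesis by (simp add: pw_def nat_add_distrib[symmetric] rep_add[symmetric] hnn_refl)
  qed
qed

lemma comm_inv:
  assumes "hnn_eq H K \<phi> (u @ v) (v @ u)" "hnn_eq H K \<phi> (v @ v') []" "hnn_eq H K \<phi> (v' @ v) []"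
  shows "hnn_eq H K \<phi> (u @ v') (v' @ u)"
proof -
  have "hnn_eq H K \<phi> (u @ v') (v' @ v @ u @ v')"
    using Ectx[OF hnn_sym[OF assms(3)], of "[]" "u @ v'"] by simp
  also have "hnn_eq H K \<phi> (v' @ v @ u @ v') (v' @ u @ v @ v')"
    using Ectx[OF hnn_sym[OF assms(1)], of "v'" "v'"] by simp
  also have "hnn_eq H K \<phi> (v' @ u @ v @ v') (v' @ u)"
    using Ectx[OF assms(2), of "v' @ u" "[]"] by simp
  finally show ?thesis .
qed

lemma comm_rep:
  assumes "hnn_eq H K \<phi> (u @ v) (v @ u)"
  shows "hnn_eq H K \<phi> (rep u n @ v) (v @ rep u n)"
proof (induction n)
  case 0 show ?case by (simp add: hnn_refl)
next
  case (Suc n)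
  have "hnn_eq H K \<phi> (rep u (Suc n) @ v) (u @ v @ rep u n)"
    using Ectx[OF Suc, of u "[]"] by (simp add: rep_Suc)
  also have "hnn_eq H K \<phi> (u @ v @ rep u n) (v @ rep u (Suc n))"
    using Ectx[OF assms, of "[]" "rep u n"] by (simp add: rep_Suc)
  finally show ?case .
qed

lemma comm_rep2:
  assumes "hnn_eq H K \<phi> (u @ v) (v @ u)"
  shows "hnn_eq H K \<phi> (rep u n @ rep v m) (rep v m @ rep u n)"
  using hnn_sym[OF comm_rep[OF hnn_sym[OF comm_rep[OF assms, of n]], of m]] .

lemma comm_pw:
  assumes c: "hnn_eq H K \<phi> (u @ v) (v @ u)"
    and u1: "hnn_eq H K \<phi> (u @ u') []" and u2: "hnn_eq H K \<phi> (u' @ u) []"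
    and v1: "hnn_eq H K \<phi> (v @ v') []" and v2: "hnn_eq H K \<phi> (v' @ v) []"
  shows "hnn_eq H K \<phi> (pw u u' a @ pw v v' b) (pw v v' b @ pw u u' a)"
proof -
  have c2: "hnn_eq H K \<phi> (u @ v') (v' @ u)" by (rule comm_inv[OF c v1 v2])
  have c3: "hnn_eq H K \<phi> (u' @ v) (v @ u')"
    using hnn_sym[OF comm_inv[OF hnn_sym[OF c] u1 u2]] .
  have c4: "hnn_eq H K \<phi> (u' @ v') (v' @ u')"
    using hnn_sym[OF comm_inv[OF hnn_sym[OF c2] u1 u2]] .
  show ?thesis unfolding pw_def using comm_rep2[OF c] comm_rep2[OF c2] comm_rep2[OF c3] comm_rep2[OF c4]
    by auto
qed


definition cK :: "'h set \<Rightarrow> 'h \<Rightarrow> int" where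
  "cK K a = (if a \<in> K then 1 else 0)"

fun act :: "('h, 'm) monoid_scheme \<Rightarrow> 'h set \<Rightarrow> ('h \<Rightarrow> 'h) \<Rightarrow> ('h + bool) \<Rightarrow> ('h \<times> int) \<Rightarrow> ('h \<times> int)" where
  "act H K \<phi> (Inl h) (a, m) = (if h \<in> carrier H then h \<otimes>\<^bsub>H\<^esub> a else a, m)"
| "act H K \<phi> (Inr True) (a, m) = (\<phi> a, m + cK K a)"
| "act H K \<phi> (Inr False) (b, m) = (inv_into (carrier H) \<phi> b, m - cK K (inv_into (carrier H) \<phi> b))"

definition actw where "actw H K \<phi> w p = foldr (act H K \<phi>) w p"

lemma actw_append: "actw H K \<phi> (u @ v) p = actw H K \<phi> u (actw H K \<phi> v p)"
  by (simp add: actw_def)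

lemma actw_simps[simp]: "actw H K \<phi> [] p = p" "actw H K \<phi> (l # w) p = act H K \<phi> l (actw H K \<phi> w p)"
  by (simp_all add: actw_def)

lemma iso_facts:
  assumes "group H" "\<phi> \<in> iso H H"
  shows "\<And>x. x \<in> carrier H \<Longrightarrow> \<phi> x \<in> carrier H"
    and "\<And>x y. x \<in> carrier H \<Longrightarrow> y \<in> carrier H \<Longrightarrow> \<phi> (x \<otimes>\<^bsub>H\<^esub> y) = \<phi> x \<otimes>\<^bsub>H\<^esub> \<phi> y"
    and "\<And>b. b \<in> carrier H \<Longrightarrow> inv_into (carrier H) \<phi> b \<in> carrier H"
    and "\<And>b. b \<in> carrier H \<Longrightarrow> \<phi> (inv_into (carrier H) \<phi> b) = b"
    and "\<And>x. x \<in> carrier H \<Longrightarrow> inv_into (carrier H) \<phi> (\<phi> x) = x"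
    and "\<phi> \<one>\<^bsub>H\<^esub> = \<one>\<^bsub>H\<^esub>"
proof -
  have hom: "\<phi> \<in> hom H H" and bij: "bij_betw \<phi> (carrier H) (carrier H)"
    using assms(2) by (auto simp: iso_def)
  show "\<And>x. x \<in> carrier H \<Longrightarrow> \<phi> x \<in> carrier H" using hom by (auto simp: hom_def)
  show "\<And>x y. x \<in> carrier H \<Longrightarrow> y \<in> carrier H \<Longrightarrow> \<phi> (x \<otimes>\<^bsub>H\<^esub> y) = \<phi> x \<otimes>\<^bsub>H\<^esub> \<phi> y"
    using hom by (auto simp: hom_def)
  show "\<And>b. b \<in> carrier H \<Longrightarrow> inv_into (carrier H) \<phi> b \<in> carrier H"
    using bij by (metis bij_betw_def inv_into_into)
  show "\<And>b. b \<in> carrier H \<Longrightarrow> \<phi> (inv_into (carrier H) \<phi> b) = b"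
    using bij by (metis bij_betw_def f_inv_into_f)
  show "\<And>x. x \<in> carrier H \<Longrightarrow> inv_into (carrier H) \<phi> (\<phi> x) = x"
    using bij by (metis bij_betw_def inv_into_f_f)
  show "\<phi> \<one>\<^bsub>H\<^esub> = \<one>\<^bsub>H\<^esub>"
    using hom assms(1) by (simp add: group.is_monoid group_hom.hom_one group_hom_axioms_def group_hom_def)
qed

lemma act_closed:
  assumes "group H" "\<phi> \<in> iso H H" "fst p \<in> carrier H"
  shows "fst (act H K \<phi> l p) \<in> carrier H"
proof -
  obtain a m where p: "p = (a, m)" by force
  show ?thesis
  proof (cases l)
    case (Inl h)
    then show ?thesis using assms unfolding p by (auto intro: group.is_monoid monoid.m_closed)
  next
    case (Inr bb)
    then show ?thesis using assms iso_facts[OF assms(1,2)] unfolding p by (cases bb) auto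
  qed
qed

lemma actw_closed:
  assumes "group H" "\<phi> \<in> iso H H" "fst p \<in> carrier H"
  shows "fst (actw H K \<phi> w p) \<in> carrier H"
  by (induction w) (auto intro: act_closed[OF assms(1,2)] simp: assms(3))

lemma actw_inv:
  assumes G: "group H" and I: "\<phi> \<in> iso H H" and S: "subgroup K H"
  assumes "hnn_eq H K \<phi> u v"
  shows "\<forall>p. fst p \<in> carrier H \<longrightarrow> actw H K \<phi> u p = actw H K \<phi> v p"
  using assms(4)
proof (induction rule: hnn_eq.induct)
  case (hnn_refl w)
  then show ?case by simp
next
  case (hnn_sym u v)
  then show ?case by simp
next
  case (hnn_trans u v w)
  then show ?case by simp
next
  case (hnn_cong u v a b)
  show ?case
  proof (intro allI impI)
    fix p :: "'a \<times> int" assume "fst p \<in> carrier H"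
    then have q: "fst (actw H K \<phi> b p) \<in> carrier H" by (rule actw_closed[OF G I])
    have "actw H K \<phi> u (actw H K \<phi> b p) = actw H K \<phi> v (actw H K \<phi> b p)"
      using hnn_cong.IH q by blast
    then show "actw H K \<phi> (a @ u @ b) p = actw H K \<phi> (a @ v @ b) p" by (simp add: actw_append)
  qed
next
  case (hnn_mult a b)
  then show ?case using G by (auto simp: group.is_monoid monoid.m_assoc monoid.m_closed)
next
  case hnn_one
  then show ?case using G by (auto simp: group.is_monoid monoid.l_one monoid.one_closed)
next
  case hnn_t_tinv
  then show ?case using iso_facts[OF G I] by auto
next
  case hnn_tinv_t
  then show ?case using iso_facts[OF G I] by auto
next
  case (hnn_conj k)
  show ?case
  proof (intro allI impI)
    fix p :: "'a \<times> int" assume "fst p \<in> carrier H"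
    then obtain b m where p: "p = (b, m)" and b: "b \<in> carrier H" by (cases p) auto
    define a where "a = inv_into (carrier H) \<phi> b"
    have a: "a \<in> carrier H" "\<phi> a = b" using iso_facts[OF G I] b by (auto simp: a_def)
    have k: "k \<in> carrier H" using hnn_conj S subgroup.subset by blast
    have c: "cK K (k \<otimes>\<^bsub>H\<^esub> a) = cK K a"
    proof -
      have "k \<otimes>\<^bsub>H\<^esub> a \<in> K \<longleftrightarrow> a \<in> K"
      proof
        assume "k \<otimes>\<^bsub>H\<^esub> a \<in> K"
        then have "inv\<^bsub>H\<^esub> k \<otimes>\<^bsub>H\<^esub> (k \<otimes>\<^bsub>H\<^esub> a) \<in> K"
          using S hnn_conj by (meson subgroup.m_closed subgroup.m_inv_closed)
        then show "a \<in> K" using G k a by (simp add: group.inv_solve_left' group.l_inv group.is_monoid monoid.m_assoc[symmetric] monoid.l_one)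
      next
        assume "a \<in> K" then show "k \<otimes>\<^bsub>H\<^esub> a \<in> K" using S hnn_conj subgroup.m_closed by metis
      qed
      then show ?thesis by (simp add: cK_def)
    qed
    have "\<phi> (k \<otimes>\<^bsub>H\<^esub> a) = \<phi> k \<otimes>\<^bsub>H\<^esub> b" using iso_facts(2)[OF G I k a(1)] a by simp
    then show "actw H K \<phi> [Inr True, Inl k, Inr False] p = actw H K \<phi> [Inl (\<phi> k)] p"
      using p k a c iso_facts(1)[OF G I k] by (simp add: a_def[symmetric])
  qed
qed


lemma words_append: "u \<in> hnn_words H \<Longrightarrow> v \<in> hnn_words H \<Longrightarrow> u @ v \<in> hnn_words H"
  by (auto simp: hnn_words_def)

lemma cls_mem: "u \<in> hnn_words H \<Longrightarrow> u \<in> hnn_class H K \<phi> u"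
  by (simp add: hnn_class_def hnn_refl)

lemma cls_eq: "hnn_eq H K \<phi> u v \<Longrightarrow> hnn_class H K \<phi> u = hnn_class H K \<phi> v"
  unfolding hnn_class_def by (meson hnn_sym hnn_trans)

lemma cls_E: "u \<in> hnn_words H \<Longrightarrow> hnn_class H K \<phi> u = hnn_class H K \<phi> v \<Longrightarrow> hnn_eq H K \<phi> u v"
  using cls_mem[of u H K \<phi>] by (auto simp: hnn_class_def)

lemma HNN_mult:
  assumes "u \<in> hnn_words H" "v \<in> hnn_words H"
  shows "hnn_class H K \<phi> u \<otimes>\<^bsub>HNN H K \<phi>\<^esub> hnn_class H K \<phi> v = hnn_class H K \<phi> (u @ v)"
proof -
  define u0 where "u0 = (SOME x. x \<in> hnn_class H K \<phi> u)"
  define v0 where "v0 = (SOME x. x \<in> hnn_class H K \<phi> v)"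
  have "u0 \<in> hnn_class H K \<phi> u" unfolding u0_def by (rule someI, rule cls_mem[OF assms(1)])
  then have u0: "hnn_eq H K \<phi> u0 u" by (simp add: hnn_class_def)
  have "v0 \<in> hnn_class H K \<phi> v" unfolding v0_def by (rule someI, rule cls_mem[OF assms(2)])
  then have v0: "hnn_eq H K \<phi> v0 v" by (simp add: hnn_class_def)
  have "hnn_class H K \<phi> u \<otimes>\<^bsub>HNN H K \<phi>\<^esub> hnn_class H K \<phi> v = hnn_class H K \<phi> (u0 @ v0)"
    by (simp add: HNN_def u0_def v0_def)
  also have "\<dots> = hnn_class H K \<phi> (u @ v)" by (rule cls_eq, rule E_app[OF u0 v0])
  finally show ?thesis .
qed

lemma merge2:
  assumes "group H" "a \<in> carrier H" "b \<in> carrier H" "c \<in> carrier H" "d \<in> carrier H"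
    "a \<otimes>\<^bsub>H\<^esub> b = c \<otimes>\<^bsub>H\<^esub> d"
  shows "hnn_eq H K \<phi> [Inl a, Inl b] [Inl c, Inl d]"
proof -
  have "hnn_eq H K \<phi> [Inl a, Inl b] [Inl (c \<otimes>\<^bsub>H\<^esub> d)]" using hnn_mult[OF assms(2,3)] assms(6) by simp
  also have "hnn_eq H K \<phi> [Inl (c \<otimes>\<^bsub>H\<^esub> d)] [Inl c, Inl d]" by (rule hnn_sym, rule hnn_mult[OF assms(4,5)])
  finally show ?thesis .
qed

lemma cancel2:
  assumes "a \<in> carrier H" "b \<in> carrier H" "a \<otimes>\<^bsub>H\<^esub> b = \<one>\<^bsub>H\<^esub>"
  shows "hnn_eq H K \<phi> [Inl a, Inl b] []"
proof -
  have "hnn_eq H K \<phi> [Inl a, Inl b] [Inl \<one>\<^bsub>H\<^esub>]" using hnn_mult[OF assms(1,2)] assms(3) by simp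
  also have "hnn_eq H K \<phi> [Inl \<one>\<^bsub>H\<^esub>] []" by (rule hnn_one)
  finally show ?thesis .
qed

lemma tcomm: "x \<in> K \<Longrightarrow> hnn_eq H K \<phi> [Inr True, Inl x] [Inl (\<phi> x), Inr True]"
proof -
  assume x: "x \<in> K"
  have "hnn_eq H K \<phi> [Inr True, Inl x] [Inr True, Inl x, Inr False, Inr True]"
    using Ectx[OF hnn_sym[OF hnn_tinv_t], where p="[Inr True, Inl x]" and s="[]" and H=H and K=K and \<phi>=\<phi>] by simp
  also have "hnn_eq H K \<phi> [Inr True, Inl x, Inr False, Inr True] [Inl (\<phi> x), Inr True]"
    using Ectx[OF hnn_conj[OF x], where p="[]" and s="[Inr True]" and H=H and \<phi>=\<phi>] by simp
  finally show ?thesis .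
qed

lemma tinvcomm: "x \<in> K \<Longrightarrow> hnn_eq H K \<phi> [Inr False, Inl (\<phi> x)] [Inl x, Inr False]"
proof -
  assume x: "x \<in> K"
  have "hnn_eq H K \<phi> [Inr False, Inl (\<phi> x)] [Inr False, Inr True, Inl x, Inr False]"
    using Ectx[OF hnn_sym[OF hnn_conj[OF x]], where p="[Inr False]" and s="[]" and H=H and \<phi>=\<phi>] by simp
  also have "hnn_eq H K \<phi> [Inr False, Inr True, Inl x, Inr False] [Inl x, Inr False]"
    using Ectx[OF hnn_tinv_t, where p="[]" and s="[Inl x, Inr False]" and H=H and K=K and \<phi>=\<phi>] by simp
  finally show ?thesis .
qed

lemma actw_rep: "actw H K \<phi> (rep w (Suc n)) p = actw H K \<phi> w (actw H K \<phi> (rep w n) p)"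
  by (simp add: rep_Suc actw_append)


theorem theoremC:
  fixes H :: "('h, 'm) monoid_scheme" and K :: "'h set" and \<phi> :: "'h \<Rightarrow> 'h"
  assumes "group H"
    and "\<phi> \<in> iso H H"
    and "subgroup K H" and "K \<noteq> carrier H"
    and "K \<subset> normalizer H K"
    and "\<exists>k\<in>K. group.ord H k = 0"
  shows "\<exists>f. f \<in> hom (integer_group \<times>\<times> integer_group) (HNN H K \<phi>)
             \<and> inj_on f (carrier (integer_group \<times>\<times> integer_group))"
proof -
  interpret G: group H by fact
  note iso = iso_facts[OF assms(1,2)]
  obtain k where kK: "k \<in> K" and ko: "group.ord H k = 0" using assms(6) by blast
  obtain g where gN: "g \<in> normalizer H K" and gK: "g \<notin> K" using assms(5) by blast
  have Ksub: "K \<subseteq> carrier H" using assms(3) subgroup.subset by blast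
  have kc: "k \<in> carrier H" using kK Ksub by blast
  have gc: "g \<in> carrier H" using gN by (simp add: normalizer_def stabilizer_def)
  have gKg: "g <#\<^bsub>H\<^esub> K #>\<^bsub>H\<^esub> inv\<^bsub>H\<^esub> g = K"
    using gN Ksub by (simp add: normalizer_def stabilizer_def)
  define j where "j = inv\<^bsub>H\<^esub> g \<otimes>\<^bsub>H\<^esub> k \<otimes>\<^bsub>H\<^esub> g"
  have jK: "j \<in> K"
  proof -
    have "k \<in> g <#\<^bsub>H\<^esub> K #>\<^bsub>H\<^esub> inv\<^bsub>H\<^esub> g" using gKg kK by simp
    then obtain x' where x': "x' \<in> K" "k = g \<otimes>\<^bsub>H\<^esub> x' \<otimes>\<^bsub>H\<^esub> inv\<^bsub>H\<^esub> g"
      by (auto simp: l_coset_def r_coset_def)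
    have "j = x'" using x' gc Ksub unfolding j_def
      by (simp add: G.m_assoc G.inv_closed subsetD, simp add: G.m_assoc[symmetric] subsetD)
    then show ?thesis using x' by simp
  qed
  have jc: "j \<in> carrier H" using jK Ksub by blast
  have gj: "g \<otimes>\<^bsub>H\<^esub> j = k \<otimes>\<^bsub>H\<^esub> g"
    unfolding j_def using gc kc by (simp add: G.m_assoc[symmetric] G.r_inv)
  have jig: "j \<otimes>\<^bsub>H\<^esub> inv\<^bsub>H\<^esub> g = inv\<^bsub>H\<^esub> g \<otimes>\<^bsub>H\<^esub> k"
    unfolding j_def using gc kc by (simp add: G.m_assoc)
  define T :: "'h + bool" where "T = Inr True"
  define F :: "'h + bool" where "F = Inr False"
  define kw where "kw = [Inl k :: 'h + bool]"
  define kw' where "kw' = [Inl (inv\<^bsub>H\<^esub> k) :: 'h + bool]"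
  define yw where "yw = [F, Inl (\<phi> g), T, Inl (inv\<^bsub>H\<^esub> g)]"
  define yw' where "yw' = [Inl g, F, Inl (inv\<^bsub>H\<^esub> (\<phi> g)), T]"
  have pgc: "\<phi> g \<in> carrier H" using iso(1) gc by blast
  note E = hnn_sym[OF hnn_t_tinv[unfolded T_def[symmetric] F_def[symmetric]]]
  have k1: "hnn_eq H K \<phi> (kw @ kw') []" unfolding kw_def kw'_def
    by (simp, rule cancel2) (use kc in auto)
  have k2: "hnn_eq H K \<phi> (kw' @ kw) []" unfolding kw_def kw'_def
    by (simp, rule cancel2) (use kc in auto)
  have tf: "hnn_eq H K \<phi> [T, F] []" unfolding T_def F_def by (rule hnn_t_tinv)
  have ft: "hnn_eq H K \<phi> [F, T] []" unfolding T_def F_def by (rule hnn_tinv_t)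
  have y1: "hnn_eq H K \<phi> (yw @ yw') []"
  proof -
    have "hnn_eq H K \<phi> (yw @ yw') [F, Inl (\<phi> g), T, F, Inl (inv\<^bsub>H\<^esub> (\<phi> g)), T]"
      using Ectx[OF cancel2[of "inv\<^bsub>H\<^esub> g" H g], where p="[F, Inl (\<phi> g), T]" and s="[F, Inl (inv\<^bsub>H\<^esub> (\<phi> g)), T]" and K=K and \<phi>=\<phi>]
        gc by (simp add: yw_def yw'_def)
    also have "hnn_eq H K \<phi> [F, Inl (\<phi> g), T, F, Inl (inv\<^bsub>H\<^esub> (\<phi> g)), T] [F, Inl (\<phi> g), Inl (inv\<^bsub>H\<^esub> (\<phi> g)), T]"
      using Ectx[OF tf, where p="[F, Inl (\<phi> g)]" and s="[Inl (inv\<^bsub>H\<^esub> (\<phi> g)), T]"] by simp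
    also have "hnn_eq H K \<phi> [F, Inl (\<phi> g), Inl (inv\<^bsub>H\<^esub> (\<phi> g)), T] [F, T]"
      using Ectx[OF cancel2[of "\<phi> g" H "inv\<^bsub>H\<^esub> (\<phi> g)"], where p="[F]" and s="[T]" and K=K and \<phi>=\<phi>]
        pgc by simp
    also note ft
    finally show ?thesis .
  qed
  have y2: "hnn_eq H K \<phi> (yw' @ yw) []"
  proof -
    have "hnn_eq H K \<phi> (yw' @ yw) [Inl g, F, Inl (inv\<^bsub>H\<^esub> (\<phi> g)), Inl (\<phi> g), T, Inl (inv\<^bsub>H\<^esub> g)]"
      using Ectx[OF tf, where p="[Inl g, F, Inl (inv\<^bsub>H\<^esub> (\<phi> g))]" and s="[Inl (\<phi> g), T, Inl (inv\<^bsub>H\<^esub> g)]"]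
      by (simp add: yw_def yw'_def)
    also have "hnn_eq H K \<phi> [Inl g, F, Inl (inv\<^bsub>H\<^esub> (\<phi> g)), Inl (\<phi> g), T, Inl (inv\<^bsub>H\<^esub> g)] [Inl g, F, T, Inl (inv\<^bsub>H\<^esub> g)]"
      using Ectx[OF cancel2[of "inv\<^bsub>H\<^esub> (\<phi> g)" H "\<phi> g"], where p="[Inl g, F]" and s="[T, Inl (inv\<^bsub>H\<^esub> g)]" and K=K and \<phi>=\<phi>]
        pgc by simp
    also have "hnn_eq H K \<phi> [Inl g, F, T, Inl (inv\<^bsub>H\<^esub> g)] [Inl g, Inl (inv\<^bsub>H\<^esub> g)]"
      using Ectx[OF ft, where p="[Inl g]" and s="[Inl (inv\<^bsub>H\<^esub> g)]"] by simp
    also have "hnn_eq H K \<phi> [Inl g, Inl (inv\<^bsub>H\<^esub> g)] []"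
      by (rule cancel2) (use gc in auto)
    finally show ?thesis .
  qed
  have yk: "hnn_eq H K \<phi> (yw @ kw) (kw @ yw)"
  proof -
    have "hnn_eq H K \<phi> (yw @ kw) [F, Inl (\<phi> g), T, Inl j, Inl (inv\<^bsub>H\<^esub> g)]"
      using Ectx[OF merge2[OF assms(1), of "inv\<^bsub>H\<^esub> g" k j "inv\<^bsub>H\<^esub> g"], where p="[F, Inl (\<phi> g), T]" and s="[]" and K=K and \<phi>=\<phi>]
        gc kc jc jig by (simp add: yw_def kw_def)
    also have "hnn_eq H K \<phi> [F, Inl (\<phi> g), T, Inl j, Inl (inv\<^bsub>H\<^esub> g)] [F, Inl (\<phi> g), Inl (\<phi> j), T, Inl (inv\<^bsub>H\<^esub> g)]"
      using Ectx[OF tcomm[OF jK], where p="[F, Inl (\<phi> g)]" and s="[Inl (inv\<^bsub>H\<^esub> g)]" and H=H and \<phi>=\<phi>]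
      by (simp add: T_def)
    also have "hnn_eq H K \<phi> [F, Inl (\<phi> g), Inl (\<phi> j), T, Inl (inv\<^bsub>H\<^esub> g)] [F, Inl (\<phi> k), Inl (\<phi> g), T, Inl (inv\<^bsub>H\<^esub> g)]"
    proof -
      have "\<phi> g \<otimes>\<^bsub>H\<^esub> \<phi> j = \<phi> k \<otimes>\<^bsub>H\<^esub> \<phi> g"
        using iso(2)[OF gc jc] iso(2)[OF kc gc] gj by simp
      then show ?thesis
        using Ectx[OF merge2[OF assms(1), of "\<phi> g" "\<phi> j" "\<phi> k" "\<phi> g"], where p="[F]" and s="[T, Inl (inv\<^bsub>H\<^esub> g)]" and K=K and \<phi>=\<phi>]
          iso(1) gc jc kc by simp
    qed
    also have "hnn_eq H K \<phi> [F, Inl (\<phi> k), Inl (\<phi> g), T, Inl (inv\<^bsub>H\<^esub> g)] (kw @ yw)"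
      using Ectx[OF tinvcomm[OF kK], where p="[]" and s="[Inl (\<phi> g), T, Inl (inv\<^bsub>H\<^esub> g)]" and H=H and \<phi>=\<phi>]
      by (simp add: F_def kw_def yw_def)
    finally show ?thesis .
  qed
  define W where "W = (\<lambda>(a, b). pw kw kw' a @ pw yw yw' b)"
  define f where "f = (\<lambda>x. hnn_class H K \<phi> (W x))"
  have Ww: "W x \<in> hnn_words H" for x
  proof -
    obtain a b where x: "x = (a, b)" by force
    have "set (W x) \<subseteq> set kw \<union> set kw' \<union> set yw \<union> set yw'"
      using set_pw[of kw kw' a] set_pw[of yw yw' b] unfolding W_def x by auto
    then show ?thesis using gc kc pgc unfolding hnn_words_def kw_def kw'_def yw_def yw'_def T_def F_def
      by auto
  qed
  have hom: "f \<in> hom (integer_group \<times>\<times> integer_group) (HNN H K \<phi>)"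
  proof (rule homI)
    fix x show "f x \<in> carrier (HNN H K \<phi>)" using Ww unfolding f_def HNN_def by auto
  next
    fix x y :: "int \<times> int"
    obtain a b where x: "x = (a, b)" by force
    obtain c d where y: "y = (c, d)" by force
    have "hnn_eq H K \<phi> (W (a, b) @ W (c, d)) (pw kw kw' a @ pw kw kw' c @ pw yw yw' b @ pw yw yw' d)"
      using Ectx[OF comm_pw[OF yk y1 y2 k1 k2, of b c], where p="pw kw kw' a" and s="pw yw yw' d"]
      by (simp add: W_def)
    also have "hnn_eq H K \<phi> (pw kw kw' a @ pw kw kw' c @ pw yw yw' b @ pw yw yw' d) (W (a + c, b + d))"
      using E_app[OF pw_add[OF k1 k2, of a c] pw_add[OF y1 y2, of b d]] by (simp add: W_def)
    finally have e: "hnn_eq H K \<phi> (W (a, b) @ W (c, d)) (W (a + c, b + d))" .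
    show "f (x \<otimes>\<^bsub>integer_group \<times>\<times> integer_group\<^esub> y) = f x \<otimes>\<^bsub>HNN H K \<phi>\<^esub> f y"
      unfolding f_def x y using HNN_mult[OF Ww Ww] cls_eq[OF e] by simp
  qed
  have act_y: "actw H K \<phi> yw (g, m) = (g, m + 1)" for m
    using gc gK iso kK G.l_inv[OF gc] assms(3) subgroup.one_closed[OF assms(3)]
    by (simp add: yw_def T_def F_def cK_def G.r_one)
  have act_y': "actw H K \<phi> yw' (g, m) = (g, m - 1)" for m
    using gc gK iso pgc G.l_inv[OF pgc] subgroup.one_closed[OF assms(3)] iso(5)[OF G.one_closed]
    by (simp add: yw'_def T_def F_def cK_def G.r_one)
  have act_k: "x \<in> carrier H \<Longrightarrow> actw H K \<phi> kw (x, m) = (k \<otimes>\<^bsub>H\<^esub> x, m)" for x m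
    using kc by (simp add: kw_def)
  have act_k': "x \<in> carrier H \<Longrightarrow> actw H K \<phi> kw' (x, m) = (inv\<^bsub>H\<^esub> k \<otimes>\<^bsub>H\<^esub> x, m)" for x m
    using kc by (simp add: kw'_def)
  have rep_y: "actw H K \<phi> (rep yw n) (g, m) = (g, m + int n)" for n m
    by (induction n arbitrary: m) (simp_all add: actw_rep act_y)
  have rep_y': "actw H K \<phi> (rep yw' n) (g, m) = (g, m - int n)" for n m
    by (induction n arbitrary: m) (simp_all add: actw_rep act_y')
  have rep_k: "x \<in> carrier H \<Longrightarrow> actw H K \<phi> (rep kw n) (x, m) = (k [^]\<^bsub>H\<^esub> n \<otimes>\<^bsub>H\<^esub> x, m)" for n m x
  proof (induction n)
    case (Suc n) then show ?case using kc G.nat_pow_Suc2[OF kc, of n]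
      by (simp del: nat_pow_Suc add: actw_rep act_k G.m_assoc)
  qed simp
  have rep_k': "x \<in> carrier H \<Longrightarrow> actw H K \<phi> (rep kw' n) (x, m) = ((inv\<^bsub>H\<^esub> k) [^]\<^bsub>H\<^esub> n \<otimes>\<^bsub>H\<^esub> x, m)" for n m x
  proof (induction n)
    case (Suc n) then show ?case using kc G.nat_pow_Suc2[OF G.inv_closed[OF kc], of n]
      by (simp del: nat_pow_Suc add: actw_rep act_k' G.m_assoc)
  qed simp
  have pw_k: "actw H K \<phi> (pw kw kw' a) (g, m) = (k [^]\<^bsub>H\<^esub> a \<otimes>\<^bsub>H\<^esub> g, m)" for a m
  proof (cases "0 \<le> a")
    case True
    then have "k [^]\<^bsub>H\<^esub> a = k [^]\<^bsub>H\<^esub> (nat a)" by (metis int_pow_int nat_0_le)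
    then show ?thesis using True rep_k[OF gc] by (simp add: pw_def)
  next
    case False
    then have "k [^]\<^bsub>H\<^esub> a = inv\<^bsub>H\<^esub> (k [^]\<^bsub>H\<^esub> (nat (-a)))"
      using G.int_pow_neg_int[OF kc, of "nat (-a)"] by simp
    then show ?thesis using False rep_k'[OF gc] G.nat_pow_inv[OF kc] by (simp add: pw_def)
  qed
  have pw_y: "actw H K \<phi> (pw yw yw' b) (g, m) = (g, m + b)" for b m
    using rep_y rep_y' by (simp add: pw_def)
  have inj: "inj_on f (carrier (integer_group \<times>\<times> integer_group))"
  proof (rule inj_onI)
    fix x y assume "f x = f y"
    then have e: "hnn_eq H K \<phi> (W x) (W y)" unfolding f_def by (rule cls_E[OF Ww])
    obtain a b where x: "x = (a, b)" by force
    obtain c d where y: "y = (c, d)" by force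
    have "actw H K \<phi> (W x) (g, 0) = actw H K \<phi> (W y) (g, 0)"
      using actw_inv[OF assms(1,2,3) e] gc by simp
    then have "(k [^]\<^bsub>H\<^esub> a \<otimes>\<^bsub>H\<^esub> g, b) = (k [^]\<^bsub>H\<^esub> c \<otimes>\<^bsub>H\<^esub> g, d)"
      unfolding x y W_def by (simp add: actw_append pw_y pw_k)
    then have "b = d" and "k [^]\<^bsub>H\<^esub> a = k [^]\<^bsub>H\<^esub> c"
      using G.right_cancel[OF gc G.int_pow_closed[OF kc] G.int_pow_closed[OF kc]] by auto
    then have "a = c" using G.int_pow_eq[OF kc] ko by simp
    then show "x = y" using x y \<open>b = d\<close> by simp
  qed
  show ?thesis using hom inj by blast
qed

end
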